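(* Let $N=\{1,\ldots,n\}$, $\mathcal{X}=\{-1,1\}^n$, and let $\phi:\mathcal{X}\to\{-1,1\}$ be a deterministic voting rule. Let $w\in\mathbb{R}_+^n$ be a nonzero nonnegative weight vector. Then: (1) $\phi$ is a weighted majority rule (WMR) with weight vector $w$ if and only if $$\frac{\sum_{i\in N} w_i r_i(\phi,p)}{\sum_{i\in N} w_i}\ \geq\ \frac12 \quad\text{for all } p\in\Delta(\mathcal{X}).$$ (2) $\phi$ is a WMR with weight vector $w$ allowing no ties if and only if $$\frac{\sum_{i\in N} w_i r_i(\phi,p)}{\sum_{i\in N} w_i}\ >\ \frac12 \quad\text{for all } p\in\Delta(\mathcal{X}).$$
   Context: $\Delta(\mathcal{X})$ is the set of all probability distributions on $\mathcal{X}$. For $p\in\Delta(\mathcal{X})$, the responsiveness of individual $i$ is $r_i(\phi,p)=p(\{x\in\mathcal{X}:\phi(x)=x_i\})$. A deterministic voting rule $\phi$ is a weighted majority rule (WMR) with nonzero weight vector $w\in\mathbb{R}^n$ if $\phi(x)=1$ whenever $\sum_i w_ix_i>0$ and $\phi(x)=-1$ whenever $\sum_i w_ix_i<0$ (profiles with $\sum_i w_ix_i=0$, called ties, may be assigned arbitrarily). The WMR with weight vector $w$ allows no ties if $\sum_i w_ix_i\neq 0$ for every $x\in\mathcal{X}$. *)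

theory Defs
  imports Complex_Main "HOL-Library.FuncSet"
begin

text \<open>Voters are indexed by 0..n-1 (standing for N = 1..n). A profile is an
element of the extensional function space {..<n} -> {-1,1}.\<close>

definition profiles :: "nat \<Rightarrow> (nat \<Rightarrow> int) set" where
  "profiles n = PiE {..<n} (\<lambda>_. {-1, 1})"

text \<open>Delta(X): probability distributions on the finite set X, given by their
probability mass functions (values outside X are irrelevant).\<close>

definition distributions :: "nat \<Rightarrow> ((nat \<Rightarrow> int) \<Rightarrow> real) set" where
  "distributions n = {p. (\<forall>x\<in>profiles n. p x \<ge> 0) \<and> (\<Sum>x\<in>profiles n. p x) = 1}"

definition responsiveness ::
  "nat \<Rightarrow> ((nat \<Rightarrow> int) \<Rightarrow> int) \<Rightarrow> ((nat \<Rightarrow> int) \<Rightarrow> real) \<Rightarrow> nat \<Rightarrow> real" where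
  "responsiveness n \<phi> p i = (\<Sum>x\<in>{x\<in>profiles n. \<phi> x = x i}. p x)"

definition is_WMR :: "nat \<Rightarrow> (nat \<Rightarrow> real) \<Rightarrow> ((nat \<Rightarrow> int) \<Rightarrow> int) \<Rightarrow> bool" where
  "is_WMR n w \<phi> \<longleftrightarrow> (\<exists>i<n. w i \<noteq> 0) \<and>
     (\<forall>x\<in>profiles n.
        ((\<Sum>i<n. w i * real_of_int (x i)) > 0 \<longrightarrow> \<phi> x = 1) \<and>
        ((\<Sum>i<n. w i * real_of_int (x i)) < 0 \<longrightarrow> \<phi> x = -1))"

definition no_ties :: "nat \<Rightarrow> (nat \<Rightarrow> real) \<Rightarrow> bool" where
  "no_ties n w \<longleftrightarrow> (\<forall>x\<in>profiles n. (\<Sum>i<n. w i * real_of_int (x i)) \<noteq> 0)"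

end

theory Submission
  imports Defs
begin

lemma profiles_finite: "finite (profiles n)"
  unfolding profiles_def by (auto intro!: finite_PiE)

lemma profiles_val: "x \<in> profiles n \<Longrightarrow> i < n \<Longrightarrow> x i \<in> {-1, 1}"
  unfolding profiles_def by auto

lemma key:
  fixes n :: nat and \<phi> :: "(nat \<Rightarrow> int) \<Rightarrow> int" and w :: "nat \<Rightarrow> real"
  assumes rule: "\<And>x. x \<in> profiles n \<Longrightarrow> \<phi> x \<in> {-1, 1}"
    and p: "p \<in> distributions n"
  shows "(\<Sum>i<n. w i * responsiveness n \<phi> p i) =
     (\<Sum>i<n. w i) / 2 + (\<Sum>x\<in>profiles n. p x * (real_of_int (\<phi> x) * (\<Sum>i<n. w i * real_of_int (x i)))) / 2"
proof -
  let ?P = "profiles n"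
  have fin: "finite ?P" by (rule profiles_finite)
  have r: "responsiveness n \<phi> p i = (\<Sum>x\<in>?P. p x * (if \<phi> x = x i then 1 else 0))" for i
    unfolding responsiveness_def using fin
    by (simp add: sum.inter_filter[symmetric] if_distrib cong: if_cong)
  have g: "(\<Sum>i<n. w i * (if \<phi> x = x i then 1 else 0)) =
      ((\<Sum>i<n. w i) + real_of_int (\<phi> x) * (\<Sum>i<n. w i * real_of_int (x i))) / 2"
    if x: "x \<in> ?P" for x
  proof -
    have "(\<Sum>i<n. w i * (if \<phi> x = x i then 1 else 0)) =
        (\<Sum>i<n. (w i + real_of_int (\<phi> x) * (w i * real_of_int (x i))) / 2)"
    proof (rule sum.cong[OF refl])
      fix i assume "i \<in> {..<n}"
      then have "x i \<in> {-1,1}" using profiles_val x by auto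
      moreover have "\<phi> x \<in> {-1,1}" using rule x by auto
      ultimately show "w i * (if \<phi> x = x i then 1 else 0) =
          (w i + real_of_int (\<phi> x) * (w i * real_of_int (x i))) / 2" by auto
    qed
    also have "\<dots> = ((\<Sum>i<n. w i) + real_of_int (\<phi> x) * (\<Sum>i<n. w i * real_of_int (x i))) / 2"
      by (simp add: sum_divide_distrib[symmetric] sum.distrib sum_distrib_left)
    finally show ?thesis .
  qed
  have "(\<Sum>i<n. w i * responsiveness n \<phi> p i) =
      (\<Sum>x\<in>?P. p x * (\<Sum>i<n. w i * (if \<phi> x = x i then 1 else 0)))"
    unfolding r by (simp add: sum_distrib_left sum.swap[of _ "{..<n}"] mult_ac)
  also have "\<dots> = (\<Sum>x\<in>?P. p x * (((\<Sum>i<n. w i) + real_of_int (\<phi> x) * (\<Sum>i<n. w i * real_of_int (x i))) / 2))"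
    by (rule sum.cong[OF refl]) (simp add: g)
  also have "\<dots> = (\<Sum>x\<in>?P. p x) * (\<Sum>i<n. w i) / 2 + (\<Sum>x\<in>?P. p x * (real_of_int (\<phi> x) * (\<Sum>i<n. w i * real_of_int (x i)))) / 2"
  proof -
    let ?A = "\<Sum>i<n. w i"
    let ?B = "\<lambda>x. real_of_int (\<phi> x) * (\<Sum>i<n. w i * real_of_int (x i))"
    have "(\<Sum>x\<in>?P. p x * ((?A + ?B x) / 2)) = (\<Sum>x\<in>?P. p x * ?A / 2 + p x * ?B x / 2)"
      by (rule sum.cong[OF refl]) (simp add: field_simps)
    also have "\<dots> = (\<Sum>x\<in>?P. p x * ?A / 2) + (\<Sum>x\<in>?P. p x * ?B x / 2)"
      by (rule sum.distrib)
    also have "(\<Sum>x\<in>?P. p x * ?A / 2) = (\<Sum>x\<in>?P. p x) * ?A / 2"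
      by (simp only: sum_divide_distrib[symmetric] sum_distrib_right)
    also have "(\<Sum>x\<in>?P. p x * ?B x / 2) = (\<Sum>x\<in>?P. p x * ?B x) / 2"
      by (simp only: sum_divide_distrib[symmetric])
    finally show ?thesis .
  qed
  also have "(\<Sum>x\<in>?P. p x) = 1" using p unfolding distributions_def by auto
  finally show ?thesis by simp
qed

lemma ind_mult: "(if b then 1 else 0) * (c::real) = (if b then c else 0)" by simp

theorem lemma2:
  fixes n :: nat and \<phi> :: "(nat \<Rightarrow> int) \<Rightarrow> int" and w :: "nat \<Rightarrow> real"
  assumes rule: "\<And>x. x \<in> profiles n \<Longrightarrow> \<phi> x \<in> {-1, 1}"
    and nonneg: "\<And>i. i < n \<Longrightarrow> w i \<ge> 0"
    and nonzero: "\<exists>i<n. w i \<noteq> 0"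
  shows "(is_WMR n w \<phi> \<longleftrightarrow>
           (\<forall>p\<in>distributions n.
              (\<Sum>i<n. w i * responsiveness n \<phi> p i) / (\<Sum>i<n. w i) \<ge> 1/2))
       \<and> (is_WMR n w \<phi> \<and> no_ties n w \<longleftrightarrow>
           (\<forall>p\<in>distributions n.
              (\<Sum>i<n. w i * responsiveness n \<phi> p i) / (\<Sum>i<n. w i) > 1/2))"
proof -
  let ?P = "profiles n"
  define W where "W = (\<Sum>i<n. w i)"
  define S where "S x = (\<Sum>i<n. w i * real_of_int (x i))" for x :: "nat \<Rightarrow> int"
  define D where "D p = (\<Sum>x\<in>?P. p x * (real_of_int (\<phi> x) * S x))" for p :: "(nat \<Rightarrow> int) \<Rightarrow> real"
  have fin: "finite ?P" by (rule profiles_finite)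
  have Wpos: "W > 0"
  proof -
    obtain j where j: "j < n" "w j \<noteq> 0" using nonzero by auto
    have "w j \<le> W" unfolding W_def using j nonneg
      by (intro member_le_sum) auto
    with j nonneg show ?thesis by force
  qed
  have expr: "(\<Sum>i<n. w i * responsiveness n \<phi> p i) / W = 1/2 + D p / (2 * W)"
    if "p \<in> distributions n" for p
    using key[OF rule that, where w=w] Wpos unfolding D_def S_def W_def
    by (simp add: field_simps)
  have ge: "(\<Sum>i<n. w i * responsiveness n \<phi> p i) / W \<ge> 1/2 \<longleftrightarrow> D p \<ge> 0"
    if "p \<in> distributions n" for p
    using expr[OF that] Wpos by (simp add: field_simps)
  have gt: "(\<Sum>i<n. w i * responsiveness n \<phi> p i) / W > 1/2 \<longleftrightarrow> D p > 0"
    if "p \<in> distributions n" for p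
    using expr[OF that] Wpos by (simp add: field_simps)
  define delta where "delta x0 = (\<lambda>x. if x = x0 then 1 else 0::real)" for x0 :: "nat \<Rightarrow> int"
  have delta_dist: "delta x0 \<in> distributions n" if "x0 \<in> ?P" for x0
    unfolding distributions_def delta_def using that fin by simp
  have Ddelta: "D (delta x0) = real_of_int (\<phi> x0) * S x0" if "x0 \<in> ?P" for x0
  proof -
    have "D (delta x0) = (\<Sum>x\<in>?P. if x = x0 then real_of_int (\<phi> x) * S x else 0)"
      unfolding D_def delta_def by (rule sum.cong[OF refl]) (rule ind_mult)
    also have "\<dots> = real_of_int (\<phi> x0) * S x0" using that fin by (simp only: sum.delta if_True)
    finally show ?thesis .
  qed
  have wmr: "is_WMR n w \<phi> \<longleftrightarrow> (\<forall>x\<in>?P. real_of_int (\<phi> x) * S x \<ge> 0)"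
  proof -
    have "((S x > 0 \<longrightarrow> \<phi> x = 1) \<and> (S x < 0 \<longrightarrow> \<phi> x = -1)) \<longleftrightarrow> real_of_int (\<phi> x) * S x \<ge> 0"
      if "x \<in> ?P" for x
    proof -
      have "\<phi> x \<in> {-1,1}" using rule that by auto
      then show ?thesis
        by (cases "S x > 0"; cases "S x < 0") (auto simp: zero_le_mult_iff)
    qed
    then show ?thesis unfolding is_WMR_def S_def[symmetric] using nonzero by auto
  qed
  have wmrnt: "is_WMR n w \<phi> \<and> no_ties n w \<longleftrightarrow> (\<forall>x\<in>?P. real_of_int (\<phi> x) * S x > 0)"
  proof -
    have "no_ties n w \<longleftrightarrow> (\<forall>x\<in>?P. S x \<noteq> 0)" unfolding no_ties_def S_def by simp
    moreover have "real_of_int (\<phi> x) \<noteq> 0" if "x \<in> ?P" for x using rule[OF that] by auto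
    ultimately show ?thesis unfolding wmr
      by (auto simp: less_le)
  qed
  have part1: "is_WMR n w \<phi> \<longleftrightarrow> (\<forall>p\<in>distributions n. D p \<ge> 0)"
  proof
    assume h: "is_WMR n w \<phi>"
    show "\<forall>p\<in>distributions n. D p \<ge> 0"
    proof
      fix p assume "p \<in> distributions n"
      then have "\<forall>x\<in>?P. p x \<ge> 0" unfolding distributions_def by auto
      then show "D p \<ge> 0" unfolding D_def using h wmr by (intro sum_nonneg) auto
    qed
  next
    assume "\<forall>p\<in>distributions n. D p \<ge> 0"
    then show "is_WMR n w \<phi>" unfolding wmr using delta_dist Ddelta by metis
  qed
  have part2: "is_WMR n w \<phi> \<and> no_ties n w \<longleftrightarrow> (\<forall>p\<in>distributions n. D p > 0)"
  proof
    assume h: "is_WMR n w \<phi> \<and> no_ties n w"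
    show "\<forall>p\<in>distributions n. D p > 0"
    proof
      fix p assume pd: "p \<in> distributions n"
      then have nn: "\<forall>x\<in>?P. p x \<ge> 0" and s1: "(\<Sum>x\<in>?P. p x) = 1" unfolding distributions_def by auto
      then obtain x0 where x0: "x0 \<in> ?P" "p x0 \<noteq> 0" by (metis sum.neutral zero_neq_one)
      have pos: "\<forall>x\<in>?P. real_of_int (\<phi> x) * S x > 0" using h wmrnt by auto
      have "p x0 * (real_of_int (\<phi> x0) * S x0) > 0" using x0 nn pos by (simp add: less_le)
      then show "D p > 0" unfolding D_def
        using fin x0 nn pos
        by (intro sum_pos2[of _ x0]) (auto simp: less_imp_le)
    qed
  next
    assume "\<forall>p\<in>distributions n. D p > 0"
    then show "is_WMR n w \<phi> \<and> no_ties n w" unfolding wmrnt using delta_dist Ddelta by metis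
  qed
  show ?thesis
    unfolding W_def[symmetric] using part1 part2 ge gt by auto
qed

end
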